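(* For every $s\ge 1$ the sequence $N\mapsto \alpha_{N,s}$ ($N\ge 2$) is non-decreasing: $\alpha_{N,s}\le\alpha_{N+1,s}$ for all $N\ge 2$.
   Context: For $N\ge 2$ and $s\ge 1$, $$\alpha_{N,s} := \inf\left\{\frac{\sum_{1\le j<k\le N}\frac{|x_j|^s+|x_k|^s}{|x_j-x_k|}}{(N-1)\sum_{k=1}^N|x_k|^{s-1}} : x_1,\dots,x_N\in\mathbb{R}^3 \text{ pairwise distinct}\right\},$$ with the convention $|x|^0=1$ (also for $x=0$) when $s=1$. *)

theory Defs
  imports "HOL-Analysis.Analysis"
begin

text \<open>Power of a norm with real exponent, with the convention that the
  zeroth power is 1 (also at 0); for a > 0 it is the usual t powr a, and 0 powr a = 0.\<close>
definition npow :: "real \<Rightarrow> real \<Rightarrow> real" where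
  "npow t a = (if a = 0 then 1 else t powr a)"

definition ratio :: "nat \<Rightarrow> real \<Rightarrow> (nat \<Rightarrow> real^3) \<Rightarrow> real" where
  "ratio N s x =
     (\<Sum>k<N. \<Sum>j<k. (npow (norm (x j)) s + npow (norm (x k)) s) / norm (x j - x k))
     / ((real N - 1) * (\<Sum>k<N. npow (norm (x k)) (s - 1)))"

definition alpha :: "nat \<Rightarrow> real \<Rightarrow> real" where
  "alpha N s = Inf {ratio N s x | x. inj_on x {..<N}}"

end

theory Submission
  imports Defs
begin

definition QQ :: "(nat \<Rightarrow> nat \<Rightarrow> real) \<Rightarrow> nat set \<Rightarrow> real" where
  "QQ f A = (\<Sum>k\<in>A. \<Sum>j\<in>A-{k}. f j k)"

lemma QQ_half:
  assumes sym: "\<And>j k. f j k = f k j"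
  shows "2 * (\<Sum>k<N. \<Sum>j<k. f j k) = QQ f {..<N}"
proof (induction N)
  case 0
  then show ?case by (simp add: QQ_def)
next
  case (Suc N)
  have "QQ f {..<Suc N} = (\<Sum>k<N. \<Sum>j\<in>{..<Suc N}-{k}. f j k) + (\<Sum>j\<in>{..<Suc N}-{N}. f j N)"
    unfolding QQ_def by simp
  also have "(\<Sum>k<N. \<Sum>j\<in>{..<Suc N}-{k}. f j k) = (\<Sum>k<N. f N k + (\<Sum>j\<in>{..<N}-{k}. f j k))"
  proof (rule sum.cong[OF refl])
    fix k assume "k \<in> {..<N}"
    then have "{..<Suc N}-{k} = insert N ({..<N}-{k})" by auto
    then show "(\<Sum>j\<in>{..<Suc N}-{k}. f j k) = f N k + (\<Sum>j\<in>{..<N}-{k}. f j k)" by simp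
  qed
  also have "\<dots> = (\<Sum>k<N. f N k) + QQ f {..<N}" by (simp add: sum.distrib QQ_def)
  also have "{..<Suc N}-{N} = {..<N}" by auto
  finally have "QQ f {..<Suc N} = (\<Sum>k<N. f N k) + QQ f {..<N} + (\<Sum>j<N. f j N)" by simp
  moreover have "(\<Sum>k<N. f N k) = (\<Sum>j<N. f j N)" using sym by simp
  ultimately show ?case using Suc by (simp add: sum.distrib algebra_simps)
qed

lemma QQ_remove:
  assumes "finite A" "i \<in> A"
  shows "QQ f (A-{i}) = QQ f A - (\<Sum>j\<in>A-{i}. f j i) - (\<Sum>k\<in>A-{i}. f i k)"
proof -
  have "QQ f A = (\<Sum>j\<in>A-{i}. f j i) + (\<Sum>k\<in>A-{i}. \<Sum>j\<in>A-{k}. f j k)"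
    unfolding QQ_def using assms by (simp add: sum.remove)
  also have "(\<Sum>k\<in>A-{i}. \<Sum>j\<in>A-{k}. f j k) = (\<Sum>k\<in>A-{i}. f i k + (\<Sum>j\<in>(A-{i})-{k}. f j k))"
  proof (rule sum.cong[OF refl])
    fix k assume k: "k \<in> A-{i}"
    have "A - {k} = insert i ((A-{i})-{k})" using k assms by auto
    then show "(\<Sum>j\<in>A-{k}. f j k) = f i k + (\<Sum>j\<in>(A-{i})-{k}. f j k)" using assms by simp
  qed
  also have "\<dots> = (\<Sum>k\<in>A-{i}. f i k) + QQ f (A-{i})" by (simp add: sum.distrib QQ_def)
  finally show ?thesis by simp
qed

lemma swap_off:
  assumes "finite A"
  shows "(\<Sum>i\<in>A. \<Sum>k\<in>A-{i}. f i k) = (\<Sum>k\<in>A. \<Sum>i\<in>A-{k}. f i k)"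
proof -
  have c: "\<And>i. A \<inter> {k. k \<noteq> i} = A - {i}" by auto
  have c2: "\<And>k. A \<inter> {i. k \<noteq> i} = A - {k}" by auto
  have "(\<Sum>i\<in>A. \<Sum>k\<in>A-{i}. f i k) = (\<Sum>i\<in>A. \<Sum>k\<in>A. if k \<noteq> i then f i k else 0)"
    using assms by (simp add: sum.If_cases c)
  also have "\<dots> = (\<Sum>k\<in>A. \<Sum>i\<in>A. if k \<noteq> i then f i k else 0)" by (rule sum.swap)
  also have "\<dots> = (\<Sum>k\<in>A. \<Sum>i\<in>A-{k}. f i k)"
    using assms by (simp add: sum.If_cases c2)
  finally show ?thesis .
qed

lemma QQ_sum_remove:
  assumes "finite A"
  shows "(\<Sum>i\<in>A. QQ f (A-{i})) = (real (card A) - 2) * QQ f A"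
proof -
  have "(\<Sum>i\<in>A. QQ f (A-{i})) = (\<Sum>i\<in>A. QQ f A - (\<Sum>j\<in>A-{i}. f j i) - (\<Sum>k\<in>A-{i}. f i k))"
    using assms by (intro sum.cong refl QQ_remove) auto
  also have "\<dots> = real (card A) * QQ f A - QQ f A - QQ f A"
    using swap_off[OF assms, of f] by (simp add: sum_subtractf QQ_def)
  finally show ?thesis by (simp add: algebra_simps)
qed

lemma sum_remove_all:
  assumes "finite A"
  shows "(\<Sum>i\<in>A. sum h (A-{i})) = (real (card A) - 1) * sum h A"
proof -
  have "(\<Sum>i\<in>A. sum h (A-{i})) = (\<Sum>i\<in>A. sum h A - h i)"
    using assms by (intro sum.cong refl) (simp add: sum_diff1)
  also have "\<dots> = real (card A) * sum h A - sum h A" by (simp add: sum_subtractf)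
  finally show ?thesis by (simp add: algebra_simps)
qed

lemma QQ_reindex:
  assumes "inj_on \<phi> A"
  shows "QQ (\<lambda>j k. f (\<phi> j) (\<phi> k)) A = QQ f (\<phi> ` A)"
proof -
  have "QQ f (\<phi> ` A) = (\<Sum>k\<in>A. \<Sum>j\<in>\<phi>`A-{\<phi> k}. f j (\<phi> k))"
    unfolding QQ_def using assms by (simp add: sum.reindex)
  also have "\<dots> = (\<Sum>k\<in>A. \<Sum>j\<in>A-{k}. f (\<phi> j) (\<phi> k))"
  proof (rule sum.cong[OF refl])
    fix k assume k: "k \<in> A"
    have e: "\<phi>`A-{\<phi> k} = \<phi>`(A-{k})" using assms k by (auto simp: inj_on_def)
    have "inj_on \<phi> (A-{k})" using assms by (rule inj_on_subset) auto
    then show "(\<Sum>j\<in>\<phi>`A-{\<phi> k}. f j (\<phi> k)) = (\<Sum>j\<in>A-{k}. f (\<phi> j) (\<phi> k))"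
      unfolding e by (simp add: sum.reindex)
  qed
  finally show ?thesis by (simp add: QQ_def)
qed

definition sk :: "nat \<Rightarrow> nat \<Rightarrow> nat" where
  "sk i k = (if k < i then k else Suc k)"

lemma sk_inj: "inj_on (sk i) A"
  by (auto simp: inj_on_def sk_def split: if_splits)

lemma sk_image: "i \<le> N \<Longrightarrow> sk i ` {..<N} = {..<Suc N} - {i}"
proof (rule set_eqI, rule iffI)
  fix y assume "i \<le> N" "y \<in> {..<Suc N} - {i}"
  then show "y \<in> sk i ` {..<N}"
  proof (cases "y < i")
    case True then show ?thesis using \<open>i \<le> N\<close> by (intro image_eqI[of _ _ y]) (auto simp: sk_def)
  next
    case False
    then obtain m where "y = Suc m" "m \<ge> i" using \<open>y \<in> {..<Suc N} - {i}\<close>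
      by (metis Diff_iff insertI1 le_eq_less_or_eq less_Suc_eq_0_disj not_less not_less_eq)
    then show ?thesis using \<open>y \<in> {..<Suc N} - {i}\<close> by (intro image_eqI[of _ _ m]) (auto simp: sk_def)
  qed
qed (auto simp: sk_def split: if_splits)

lemma npow_nonneg: "npow t a \<ge> 0"
  by (simp add: npow_def)

lemma npow_pos: "t > 0 \<Longrightarrow> npow t a > 0"
  by (simp add: npow_def)

lemma hsum_pos:
  fixes x :: "nat \<Rightarrow> real^3"
  assumes "inj_on x B" "finite B" "a \<in> B" "b \<in> B" "a \<noteq> b"
  shows "0 < (\<Sum>k\<in>B. npow (norm (x k)) c)"
proof -
  have "x a \<noteq> x b" using assms by (auto simp: inj_on_def)
  then obtain m where m: "m \<in> B" "x m \<noteq> 0" using assms by metis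
  have "0 < npow (norm (x m)) c" using m by (simp add: npow_pos)
  also have "\<dots> \<le> (\<Sum>k\<in>B. npow (norm (x k)) c)"
    using assms m by (intro member_le_sum) (auto simp: npow_nonneg)
  finally show ?thesis .
qed

lemma ratio_nonneg: "ratio N s x \<ge> 0"
  unfolding ratio_def
  apply (cases N)
   apply simp
  by (intro divide_nonneg_nonneg mult_nonneg_nonneg sum_nonneg add_nonneg_nonneg npow_nonneg)
     (auto intro!: divide_nonneg_nonneg add_nonneg_nonneg npow_nonneg)

theorem lemma3p1:
  fixes N :: nat and s :: real
  assumes "s \<ge> 1" and "N \<ge> 2"
  shows "alpha N s \<le> alpha (N + 1) s"
proof -
  define g where "g = (\<lambda>a b :: real^3. (npow (norm a) s + npow (norm b) s) / norm (a - b))"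
  have gsym: "g a b = g b a" for a b unfolding g_def by (simp add: norm_minus_commute add.commute)
  have bdd: "bdd_below {ratio N s x | x. inj_on x {..<N}}"
    by (rule bdd_belowI[of _ 0]) (auto simp: ratio_nonneg)
  have key: "alpha N s \<le> ratio (N+1) s x" if xinj: "inj_on x {..<N+1}" for x
  proof -
    define F where "F = (\<lambda>j k. g (x j) (x k))"
    define h where "h = (\<lambda>k. npow (norm (x k)) (s - 1))"
    define A where "A = {..<Suc N}"
    have Fsym: "F j k = F k j" for j k unfolding F_def by (rule gsym)
    have rat: "ratio M s y = (QQ (\<lambda>j k. g (y j) (y k)) {..<M} / 2) / ((real M - 1) * (\<Sum>k<M. npow (norm (y k)) (s - 1)))"
      for M y
    proof -
      have "(\<Sum>k<M. \<Sum>j<k. (npow (norm (y j)) s + npow (norm (y k)) s) / norm (y j - y k))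
          = (\<Sum>k<M. \<Sum>j<k. g (y j) (y k))" by (simp add: g_def)
      also have "\<dots> = QQ (\<lambda>j k. g (y j) (y k)) {..<M} / 2"
        using QQ_half[of "\<lambda>j k. g (y j) (y k)" M] gsym by simp
      finally have eq: "(\<Sum>k<M. \<Sum>j<k. (npow (norm (y j)) s + npow (norm (y k)) s) / norm (y j - y k))
          = QQ (\<lambda>j k. g (y j) (y k)) {..<M} / 2" .
      show ?thesis unfolding ratio_def eq ..
    qed
    have step: "alpha N s * (real N - 1) * sum h (A - {i}) \<le> QQ F (A-{i}) / 2" if i: "i \<in> A" for i
    proof -
      define y where "y = x \<circ> sk i"
      have iN: "i \<le> N" using i by (simp add: A_def)
      have im: "sk i ` {..<N} = A - {i}" using sk_image[OF iN] by (simp add: A_def)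
      have yinj: "inj_on y {..<N}" unfolding y_def
        using xinj im sk_inj by (intro comp_inj_on) (auto simp: A_def intro: inj_on_subset)
      have "alpha N s \<le> ratio N s y" unfolding alpha_def
        by (rule cInf_lower[OF _ bdd]) (use yinj in blast)
      moreover have Qe: "QQ (\<lambda>j k. g (y j) (y k)) {..<N} = QQ F (A-{i})"
        using QQ_reindex[OF sk_inj, of "\<lambda>a b. F a b" i "{..<N}"] im by (simp add: y_def F_def)
      moreover have he: "(\<Sum>k<N. npow (norm (y k)) (s - 1)) = sum h (A-{i})"
        using sum.reindex[OF sk_inj, of h i "{..<N}"] im by (simp add: y_def h_def)
      moreover have "0 < sum h (A-{i})"
      proof -
        obtain a b where "a \<in> {..<N}" "b \<in> {..<N}" "a \<noteq> b" using assms(2)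
          by (intro that[of 0 1]) auto
        then have "0 < (\<Sum>k<N. npow (norm (y k)) (s - 1))"
          using yinj by (intro hsum_pos) auto
        then show ?thesis using he by simp
      qed
      moreover have "real N - 1 > 0" using assms(2) by simp
      ultimately show ?thesis using rat[of N y]
        by (simp add: pos_le_divide_eq mult.assoc)
    qed
    have "alpha N s * (real N - 1) * (real (card A) - 1) * sum h A
        = (\<Sum>i\<in>A. alpha N s * (real N - 1) * sum h (A - {i}))"
      using sum_remove_all[of A h] by (simp add: sum_distrib_left[symmetric] A_def)
    also have "\<dots> \<le> (\<Sum>i\<in>A. QQ F (A-{i}) / 2)" by (rule sum_mono) (rule step)
    also have "\<dots> = (\<Sum>i\<in>A. QQ F (A-{i})) / 2"
      by (simp add: sum_divide_distrib)
    also have "\<dots> = (real (card A) - 2) * QQ F A / 2"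
      using QQ_sum_remove[of A F] by (simp add: A_def)
    finally have ineq: "alpha N s * (real N - 1) * real N * sum h A \<le> (real N - 1) * (QQ F A / 2)"
      by (simp add: A_def)
    have hpos: "0 < sum h A" unfolding h_def A_def
      using xinj assms(2) by (intro hsum_pos[of _ _ 0 1]) auto
    have N1: "real N - 1 > 0" using assms(2) by simp
    have "(real N - 1) * (alpha N s * (real N * sum h A)) \<le> (real N - 1) * (QQ F A / 2)"
      using ineq by (simp add: ac_simps)
    then have ineq2: "alpha N s * (real N * sum h A) \<le> QQ F A / 2"
      using N1 by (rule mult_left_le_imp_le)
    have "ratio (N+1) s x = (QQ F A / 2) / (real N * sum h A)"
      using rat[of "N+1" x] by (simp add: F_def h_def A_def)
    then show ?thesis using ineq2 hpos assms(2) by (simp add: pos_le_divide_eq)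
  qed
  define x0 where "x0 = (\<lambda>k::nat. (\<chi> i::3. real k))"
  have "inj_on x0 {..<N+1}"
  proof (rule inj_onI)
    fix a b assume "x0 a = x0 b"
    then have "x0 a $ 1 = x0 b $ 1" by simp
    then show "a = b" by (simp add: x0_def)
  qed
  then have ne: "{ratio (N+1) s x | x. inj_on x {..<N+1}} \<noteq> {}" by blast
  show ?thesis unfolding alpha_def[of "N+1"]
    by (rule cInf_greatest[OF ne]) (use key in blast)
qed

end
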